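(* Let $(\hat T,\hat\ell)$ be a vine decomposition of a graph $G=(V,E)$, with labels $\hat V_s$. Let $X\subseteq V$ and let $C$ be the vertex set of a connected component of $G-X$. Suppose there is a node $t$ of $\hat T$ such that $\hat V_t\cap C=\emptyset$ and every set separating $X$ from $\hat V_t$ in $G$ has at least $|X|$ vertices. Then there is a vine decomposition $(T,\ell)$ of the induced subgraph $G[X\cup C]$ with the same tree $T=\hat T$ and labels $V_s$ such that: (1) $V_t=X$; (2) $V_s\subseteq\hat V_s$ for every leaf $s\neq t$ of $T$; (3) $|V_s|\le|\hat V_s|$ for every node $s$ of $T$.
   Context: Vine decomposition of a graph $H=(W,F)$: a pair $(T,\ell)$ where $T$ is a tree and $\ell$ assigns to each node $t$ of $T$ a set $V_t\subseteq W$, such that, writing $T_v=\{t: v\in V_t\}$: (i) for each $v\in W$, $T_v$ is nonempty and induces a connected subtree of $T$; (ii) for each edge $uv\in F$, the subtrees $T_u$ and $T_v$ either share a node or some node of $T_u$ is adjacent in $T$ to some node of $T_v$. A set $S\subseteq V$ separates $A$ from $B$ if every path in $G$ (including one-vertex paths) from a vertex of $A$ to a vertex of $B$ contains a vertex of $S$. *)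

theory Defs
  imports Main
begin

definition graph :: "'a set \<Rightarrow> 'a set set \<Rightarrow> bool" where
  "graph V E \<longleftrightarrow> finite V \<and> (\<forall>e\<in>E. \<exists>u v. e = {u, v} \<and> u \<noteq> v \<and> u \<in> V \<and> v \<in> V)"

definition is_path :: "'a set \<Rightarrow> 'a set set \<Rightarrow> 'a list \<Rightarrow> bool" where
  "is_path V E p \<longleftrightarrow> p \<noteq> [] \<and> distinct p \<and> set p \<subseteq> V \<and>
     (\<forall>i. Suc i < length p \<longrightarrow> {p ! i, p ! Suc i} \<in> E)"

definition path_from_to :: "'a set \<Rightarrow> 'a set set \<Rightarrow> 'a \<Rightarrow> 'a \<Rightarrow> 'a list \<Rightarrow> bool" where
  "path_from_to V E u v p \<longleftrightarrow> is_path V E p \<and> hd p = u \<and> last p = v"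

definition induced_edges :: "'a set set \<Rightarrow> 'a set \<Rightarrow> 'a set set" where
  "induced_edges E W = {e \<in> E. e \<subseteq> W}"

definition connected_in :: "'a set \<Rightarrow> 'a set set \<Rightarrow> 'a set \<Rightarrow> bool" where
  "connected_in V E W \<longleftrightarrow> W \<subseteq> V \<and>
     (\<forall>u\<in>W. \<forall>v\<in>W. \<exists>p. path_from_to W (induced_edges E W) u v p)"

definition component :: "'a set \<Rightarrow> 'a set set \<Rightarrow> 'a set \<Rightarrow> bool" where
  "component V E C \<longleftrightarrow> C \<noteq> {} \<and> connected_in V E C \<and>
     (\<forall>D. C \<subseteq> D \<and> connected_in V E D \<longrightarrow> D = C)"

definition separates :: "'a set \<Rightarrow> 'a set set \<Rightarrow> 'a set \<Rightarrow> 'a set \<Rightarrow> 'a set \<Rightarrow> bool" where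
  "separates V E S A B \<longleftrightarrow> S \<subseteq> V \<and>
     (\<forall>a\<in>A. \<forall>b\<in>B. \<forall>p. path_from_to V E a b p \<longrightarrow> set p \<inter> S \<noteq> {})"

definition tree :: "'b set \<Rightarrow> 'b set set \<Rightarrow> bool" where
  "tree N ET \<longleftrightarrow> graph N ET \<and> N \<noteq> {} \<and>
     (\<forall>u\<in>N. \<forall>v\<in>N. \<exists>!p. path_from_to N ET u v p)"

definition degree :: "'b set set \<Rightarrow> 'b \<Rightarrow> nat" where
  "degree ET s = card {e \<in> ET. s \<in> e}"

definition leaf :: "'b set \<Rightarrow> 'b set set \<Rightarrow> 'b \<Rightarrow> bool" where
  "leaf N ET s \<longleftrightarrow> s \<in> N \<and> degree ET s = 1"

definition nodes_of :: "'b set \<Rightarrow> ('b \<Rightarrow> 'a set) \<Rightarrow> 'a \<Rightarrow> 'b set" where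
  "nodes_of N l v = {t \<in> N. v \<in> l t}"

definition vine_decomposition ::
  "'a set \<Rightarrow> 'a set set \<Rightarrow> 'b set \<Rightarrow> 'b set set \<Rightarrow> ('b \<Rightarrow> 'a set) \<Rightarrow> bool" where
  "vine_decomposition W F N ET l \<longleftrightarrow> tree N ET \<and>
     (\<forall>t\<in>N. l t \<subseteq> W) \<and>
     (\<forall>v\<in>W. nodes_of N l v \<noteq> {} \<and> connected_in N ET (nodes_of N l v)) \<and>
     (\<forall>u v. {u, v} \<in> F \<longrightarrow>
        (\<exists>s\<in>nodes_of N l u. \<exists>s'\<in>nodes_of N l v. s = s' \<or> {s, s'} \<in> ET))"

end

theory Submission
  imports Defs
begin


abbreviation ed :: "'a set set \<Rightarrow> 'a \<Rightarrow> 'a \<Rightarrow> bool" where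
  "ed E a b \<equiv> {a, b} \<in> E"

lemma is_path_succ:
  "is_path V E p \<longleftrightarrow> p \<noteq> [] \<and> distinct p \<and> set p \<subseteq> V \<and> successively (ed E) p"
  unfolding is_path_def successively_conv_nth by auto

definition conn :: "'a set \<Rightarrow> 'a set set \<Rightarrow> 'a \<Rightarrow> 'a \<Rightarrow> bool" where
  "conn W F u v \<longleftrightarrow> (\<exists>p. p \<noteq> [] \<and> set p \<subseteq> W \<and> successively (ed F) p \<and> hd p = u \<and> last p = v)"

lemma succ_join: "successively R (xs @ [y]) \<Longrightarrow> successively R (y # zs) \<Longrightarrow> successively R (xs @ y # zs)"
proof (induction xs)
  case Nil then show ?case by simp
next
  case (Cons a xs)
  then show ?case by (cases xs) auto
qed

lemma walk_to_path:
  assumes "p \<noteq> []" "successively R p"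
  shows "\<exists>q. q \<noteq> [] \<and> distinct q \<and> set q \<subseteq> set p \<and> successively R q \<and> hd q = hd p \<and> last q = last p"
  using assms
proof (induction "length p" arbitrary: p rule: less_induct)
  case less
  show ?case
  proof (cases "distinct p")
    case True then show ?thesis using less.prems by blast
  next
    case False
    then obtain xs ys zs y where p: "p = xs@[y]@ys@[y]@zs" using not_distinct_decomp by blast
    let ?q = "xs @ [y] @ zs"
    have s1: "successively R (xs @ [y])" using less.prems(2) unfolding p
      using successively_append_iff[of R "xs @ [y]" "ys @ [y] @ zs"] by simp
    have s2: "successively R (y # zs)" using less.prems(2) unfolding p
      using successively_append_iff[of R "xs @ [y] @ ys" "[y] @ zs"] by simp
    have s: "successively R ?q" using succ_join[OF s1 s2] by simp
    have l: "length ?q < length p" using p by simp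
    have hd: "hd ?q = hd p" using p by (cases xs) auto
    have la: "last ?q = last p" using p by (cases zs rule: rev_cases) auto
    obtain q where "q \<noteq> [] \<and> distinct q \<and> set q \<subseteq> set ?q \<and> successively R q \<and> hd q = hd ?q \<and> last q = last ?q"
      using less.hyps[OF l _ s] by auto
    then obtain q where q: "q \<noteq> [] \<and> distinct q \<and> set q \<subseteq> set ?q \<and> successively R q \<and> hd q = hd ?q \<and> last q = last ?q" by blast
    have "set ?q \<subseteq> set p" using p by auto
    then show ?thesis using q hd la by (intro exI[of _ q]) auto
  qed
qed

lemma succ_take: "successively R p \<Longrightarrow> successively R (take n p)"
  by (metis append_take_drop_id successively_append_iff)
lemma succ_drop: "successively R p \<Longrightarrow> successively R (drop n p)"
  by (metis append_take_drop_id successively_append_iff)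

lemma path_take: assumes "is_path V E p" "i < length p"
  shows "is_path V E (take (Suc i) p) \<and> hd (take (Suc i) p) = hd p \<and> last (take (Suc i) p) = p ! i"
proof -
  have e: "take (Suc i) p = take i p @ [p ! i]" using assms(2) by (simp add: take_Suc_conv_app_nth)
  have "is_path V E (take (Suc i) p)" using assms(1) unfolding is_path_succ
    using set_take_subset[of "Suc i" p] succ_take[of _ p "Suc i"] by (auto simp del: take_Suc)
  moreover have "hd (take (Suc i) p) = hd p" using assms(2) by (simp add: hd_take)
  moreover have "last (take (Suc i) p) = p ! i" unfolding e by simp
  ultimately show ?thesis by blast
qed

lemma path_drop: assumes "is_path V E p" "i < length p"
  shows "is_path V E (drop i p) \<and> hd (drop i p) = p ! i \<and> last (drop i p) = last p"
proof -
  have "is_path V E (drop i p)" using assms unfolding is_path_succ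
    using set_drop_subset[of i p] succ_drop[of _ p i] by auto
  moreover have "hd (drop i p) = p ! i" using assms(2) by (simp add: hd_drop_conv_nth)
  moreover have "last (drop i p) = last p" using assms(2) by simp
  ultimately show ?thesis by blast
qed

lemma path_rev: "is_path V E p \<Longrightarrow> is_path V E (rev p)"
  unfolding is_path_succ by (auto simp: insert_commute)

lemma path_mono: "is_path V E p \<Longrightarrow> V \<subseteq> V' \<Longrightarrow> E \<subseteq> E' \<Longrightarrow> is_path V' E' p"
  unfolding is_path_succ by (auto elim: successively_mono)

lemma succ_rev_sym: "successively (ed F) p \<Longrightarrow> successively (ed F) (rev p)"
  by (simp add: insert_commute)

lemma conn_sym: "conn W F u v \<Longrightarrow> conn W F v u"
proof -
  assume "conn W F u v"
  then obtain p where p: "p \<noteq> []" "set p \<subseteq> W" "successively (ed F) p" "hd p = u" "last p = v"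
    unfolding conn_def by blast
  have "rev p \<noteq> [] \<and> set (rev p) \<subseteq> W \<and> successively (ed F) (rev p) \<and> hd (rev p) = v \<and> last (rev p) = u"
    using p succ_rev_sym[OF p(3)] by (simp add: hd_rev last_rev)
  then show ?thesis unfolding conn_def by blast
qed

lemma succ_tl_join: "successively R p \<Longrightarrow> successively R q \<Longrightarrow> q \<noteq> [] \<Longrightarrow> last p = hd q \<Longrightarrow> p \<noteq> [] \<Longrightarrow> successively R (p @ tl q)"
proof -
  assume a: "successively R p" "successively R q" "q \<noteq> []" "last p = hd q" "p \<noteq> []"
  obtain p0 z where p0: "p = p0 @ [z]" using a(5) by (metis append_butlast_last_id)
  have q0: "q = hd q # tl q" using a(3) by simp
  have h1: "successively R (p0 @ [z])" using a(1) p0 by simp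
  have h2: "successively R (z # tl q)" using a(2,4) q0 p0 by (metis last_snoc)
  have "successively R (p0 @ z # tl q)"
    using succ_join[OF h1 h2] .
  then show ?thesis using p0 by simp
qed

lemma conn_trans: assumes "conn W F u v" "conn W F v w" shows "conn W F u w"
proof -
  obtain p where p: "p \<noteq> []" "set p \<subseteq> W" "successively (ed F) p" "hd p = u" "last p = v"
    using assms(1) unfolding conn_def by blast
  obtain q where q: "q \<noteq> []" "set q \<subseteq> W" "successively (ed F) q" "hd q = v" "last q = w"
    using assms(2) unfolding conn_def by blast
  have "successively (ed F) (p @ tl q)"
    using succ_tl_join[OF p(3) q(3) q(1)] p q by simp
  moreover have "set (p @ tl q) \<subseteq> W" using p q by (auto dest: list.set_sel(2))
  moreover have "hd (p @ tl q) = u" using p by simp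
  moreover have "last (p @ tl q) = w"
  proof (cases "tl q = []")
    case True then have "q = [v]" using q by (cases q) auto
    then show ?thesis using p q by simp
  next
    case False then show ?thesis using q by (simp add: last_tl)
  qed
  ultimately show ?thesis unfolding conn_def using p(1) by blast
qed

lemma conn_refl: "u \<in> W \<Longrightarrow> conn W F u u"
  unfolding conn_def by (rule exI[of _ "[u]"]) auto

lemma conn_edge: "u \<in> W \<Longrightarrow> v \<in> W \<Longrightarrow> {u,v} \<in> F \<Longrightarrow> conn W F u v"
  unfolding conn_def by (rule exI[of _ "[u,v]"]) auto

lemma conn_mono: "conn W F u v \<Longrightarrow> W \<subseteq> W' \<Longrightarrow> conn W' F u v"
  unfolding conn_def by blast

lemma succ_in: "successively R p \<Longrightarrow> set p \<subseteq> W \<Longrightarrow> successively (\<lambda>a b. a \<in> W \<and> b \<in> W \<and> R a b) p"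
  by (induction R p rule: successively.induct) auto

lemma conn_iff: "(\<exists>p. path_from_to W (induced_edges F W) u v p) \<longleftrightarrow> conn W F u v"
proof
  assume "\<exists>p. path_from_to W (induced_edges F W) u v p"
  then obtain p where "path_from_to W (induced_edges F W) u v p" by blast
  then have "p \<noteq> []" "set p \<subseteq> W" "successively (ed (induced_edges F W)) p" "hd p = u" "last p = v"
    unfolding path_from_to_def is_path_succ by auto
  moreover have "successively (ed F) p" using calculation(3)
    by (rule successively_mono) (simp add: induced_edges_def)
  ultimately show "conn W F u v" unfolding conn_def by blast
next
  assume "conn W F u v"
  then obtain p where p: "p \<noteq> []" "set p \<subseteq> W" "successively (ed F) p" "hd p = u" "last p = v"
    unfolding conn_def by blast
  have "successively (ed (induced_edges F W)) p"
  proof -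
    have "successively (\<lambda>a b. a \<in> W \<and> b \<in> W \<and> ed F a b) p"
      using succ_in[OF p(3,2)] .
    then show ?thesis by (rule successively_mono) (auto simp: induced_edges_def)
  qed
  then obtain q where q: "q \<noteq> []" "distinct q" "set q \<subseteq> set p" "successively (ed (induced_edges F W)) q" "hd q = hd p" "last q = last p"
    using walk_to_path[OF p(1)] by blast
  have "path_from_to W (induced_edges F W) u v q"
    unfolding path_from_to_def is_path_succ using p q by auto
  then show "\<exists>p. path_from_to W (induced_edges F W) u v p" by blast
qed




definition dpaths :: "'a set \<Rightarrow> 'a set set \<Rightarrow> 'a set \<Rightarrow> 'a set \<Rightarrow> 'a list set \<Rightarrow> bool" where
  "dpaths V E A B P \<longleftrightarrow> (\<forall>p\<in>P. is_path V E p \<and> hd p \<in> A \<and> last p \<in> B) \<and>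
     (\<forall>p\<in>P. \<forall>q\<in>P. p \<noteq> q \<longrightarrow> set p \<inter> set q = {})"

lemma dpathsD: "dpaths V E A B P \<Longrightarrow> p \<in> P \<Longrightarrow> is_path V E p \<and> hd p \<in> A \<and> last p \<in> B"
  unfolding dpaths_def by blast
lemma dpathsD2: "dpaths V E A B P \<Longrightarrow> p \<in> P \<Longrightarrow> q \<in> P \<Longrightarrow> p \<noteq> q \<Longrightarrow> set p \<inter> set q = {}"
  unfolding dpaths_def by blast
lemma dpathsI: "(\<And>p. p \<in> P \<Longrightarrow> is_path V E p \<and> hd p \<in> A \<and> last p \<in> B) \<Longrightarrow>
   (\<And>p q. p \<in> P \<Longrightarrow> q \<in> P \<Longrightarrow> p \<noteq> q \<Longrightarrow> set p \<inter> set q = {}) \<Longrightarrow> dpaths V E A B P"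
  unfolding dpaths_def by blast

lemma graph_finite_E: assumes "graph V E" shows "finite E"
proof -
  have "E \<subseteq> Pow V"
  proof
    fix e assume "e \<in> E"
    then obtain u v where "e = {u,v}" "u \<in> V" "v \<in> V" using assms unfolding graph_def by meson
    then show "e \<in> Pow V" by simp
  qed
  moreover have "finite V" using assms unfolding graph_def by blast
  ultimately show ?thesis using finite_subset by blast
qed

lemma graph_sub: "graph V E \<Longrightarrow> E' \<subseteq> E \<Longrightarrow> graph V E'"
  unfolding graph_def by blast

lemma path_avoid_edge:
  assumes "is_path V E p" "\<not> (x \<in> set p \<and> y \<in> set p)"
  shows "is_path V (E - {{x,y}}) p"
proof -
  have s: "successively (\<lambda>a b. a \<in> set p \<and> b \<in> set p \<and> ed E a b) p"
    using succ_in[of "ed E" p "set p"] assms(1) unfolding is_path_succ by blast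
  have "successively (ed (E - {{x,y}})) p"
  proof (rule successively_mono[OF s])
    fix a b assume "a \<in> set p \<and> b \<in> set p \<and> ed E a b"
    moreover have "{a,b} \<noteq> {x,y}"
    proof
      assume "{a,b} = {x,y}"
      then have "x \<in> {a,b}" "y \<in> {a,b}" by auto
      then show False using calculation assms(2) by auto
    qed
    ultimately show "ed (E - {{x,y}}) a b" by blast
  qed
  then show ?thesis using assms(1) unfolding is_path_succ by blast
qed

lemma separates_sym: "separates V E S A B \<Longrightarrow> separates V E S B A"
  unfolding separates_def path_from_to_def
proof (intro conjI ballI allI impI, blast)
  fix a b p
  assume h: "S \<subseteq> V \<and> (\<forall>a\<in>A. \<forall>b\<in>B. \<forall>p. (is_path V E p \<and> hd p = a \<and> last p = b) \<longrightarrow> set p \<inter> S \<noteq> {})"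
    and ab: "a \<in> B" "b \<in> A" and p: "is_path V E p \<and> hd p = a \<and> last p = b"
  have "is_path V E (rev p) \<and> hd (rev p) = b \<and> last (rev p) = a"
    using p path_rev[of V E p] by (auto simp: hd_rev last_rev)
  then have "set (rev p) \<inter> S \<noteq> {}" using h ab by blast
  then show "set p \<inter> S \<noteq> {}" by simp
qed

lemma path_join:
  assumes "is_path V E p" "is_path V E q" "last p = hd q" "set p \<inter> set (tl q) = {}"
  shows "is_path V E (p @ tl q) \<and> hd (p @ tl q) = hd p \<and> last (p @ tl q) = last q \<and> set (p @ tl q) \<subseteq> set p \<union> set q"
proof -
  have pq: "p \<noteq> []" "q \<noteq> []" using assms unfolding is_path_succ by auto
  have q0: "q = hd q # tl q" using pq by simp
  have d: "distinct (p @ tl q)" using assms(1,2,4) unfolding is_path_succ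
    by (auto simp: distinct_tl)
  have s: "successively (ed E) (p @ tl q)"
    using succ_tl_join[of "ed E" p q] assms pq unfolding is_path_succ by blast
  have st: "set (tl q) \<subseteq> set q" using q0 by (metis set_subset_Cons)
  have "set (p @ tl q) \<subseteq> V" using assms st unfolding is_path_succ by auto
  moreover have "last (p @ tl q) = last q"
  proof (cases "tl q = []")
    case True then have "q = [hd q]" using q0 by simp
    then show ?thesis using assms(3) True by (metis append_Nil2 last_ConsL)
  next
    case False then show ?thesis by (simp add: last_tl)
  qed
  ultimately show ?thesis using d s pq st unfolding is_path_succ by auto
qed

lemma path_split:
  assumes "is_path V E p" "i < j" "j < length p"
  shows "is_path V (E - {{p!i, p!j}}) (take (Suc i) p) \<and> is_path V (E - {{p!i, p!j}}) (drop j p)"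
proof -
  have d: "distinct p" using assms(1) unfolding is_path_succ by blast
  have "p ! j \<notin> set (take (Suc i) p)"
  proof
    assume "p ! j \<in> set (take (Suc i) p)"
    then obtain m where "m < length (take (Suc i) p)" "take (Suc i) p ! m = p ! j"
      by (metis in_set_conv_nth)
    then have "m < Suc i" "p ! m = p ! j" by auto
    then show False using d assms(2,3) nth_eq_iff_index_eq by fastforce
  qed
  moreover have "p ! i \<notin> set (drop j p)"
  proof
    assume "p ! i \<in> set (drop j p)"
    then obtain m where "m < length (drop j p)" "drop j p ! m = p ! i"
      by (metis in_set_conv_nth)
    then have "j + m < length p" "p ! (j + m) = p ! i" using assms by auto
    then show False using d assms(2,3) nth_eq_iff_index_eq by fastforce
  qed
  ultimately show ?thesis
    using path_avoid_edge[of V E "take (Suc i) p" "p!i" "p!j"] path_avoid_edge[of V E "drop j p" "p!i" "p!j"]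
      path_take[OF assms(1), of i] path_drop[OF assms(1), of j] assms by auto
qed

lemma trunc_path:
  assumes "is_path V E p" "last p \<in> B"
  shows "\<exists>p'. is_path V E p' \<and> hd p' = hd p \<and> last p' \<in> B \<and> set p' \<subseteq> set p \<and> set (butlast p') \<inter> B = {}"
proof -
  have ne: "p \<noteq> []" using assms unfolding is_path_succ by blast
  have "length p - 1 < length p" "p ! (length p - 1) \<in> B" using assms(2) ne by (auto simp: last_conv_nth)
  then have ex: "\<exists>i. i < length p \<and> p ! i \<in> B" by blast
  define i where "i = (LEAST i. i < length p \<and> p ! i \<in> B)"
  have "i < length p \<and> p ! i \<in> B" using LeastI_ex[OF ex] unfolding i_def .
  then have i: "i < length p" "p ! i \<in> B" by blast+
  have mi: "p ! j \<notin> B" if "j < i" for j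
  proof -
    have "\<not> (j < length p \<and> p ! j \<in> B)"
      using not_less_Least[of j "\<lambda>i. i < length p \<and> p ! i \<in> B"] that unfolding i_def by blast
    then show ?thesis using that i(1) by simp
  qed
  define p' where "p' = take (Suc i) p"
  have 1: "is_path V E p' \<and> hd p' = hd p \<and> last p' = p ! i" using path_take[OF assms(1) i(1)] unfolding p'_def .
  have "butlast p' = take i p" unfolding p'_def using i(1) by (simp add: take_Suc_conv_app_nth)
  moreover have "set (take i p) \<inter> B = {}"
  proof (rule ccontr)
    assume "set (take i p) \<inter> B \<noteq> {}"
    then obtain z where z: "z \<in> set (take i p)" "z \<in> B" by blast
    then obtain j where "j < length (take i p)" "take i p ! j = z" by (metis in_set_conv_nth)
    then have "j < i" "p ! j = z" by auto
    then show False using mi z(2) by metis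
  qed
  ultimately have 2: "set (butlast p') \<inter> B = {}" by simp
  have 3: "set p' \<subseteq> set p" unfolding p'_def by (rule set_take_subset)
  show ?thesis
    apply (rule exI[of _ p'])
    using 1 2 3 i(2) by simp
qed

lemma trunc_family:
  assumes "dpaths V E A B P" "finite P"
  shows "\<exists>P'. dpaths V E A B P' \<and> finite P' \<and> card P' = card P \<and> (\<forall>p\<in>P'. set (butlast p) \<inter> B = {})"
proof -
  define f where "f p = (SOME p'. is_path V E p' \<and> hd p' = hd p \<and> last p' \<in> B \<and> set p' \<subseteq> set p \<and> set (butlast p') \<inter> B = {})" for p
  have f: "is_path V E (f p) \<and> hd (f p) = hd p \<and> last (f p) \<in> B \<and> set (f p) \<subseteq> set p \<and> set (butlast (f p)) \<inter> B = {}"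
    if "p \<in> P" for p
  proof -
    have "is_path V E p" "last p \<in> B" using dpathsD[OF assms(1) that] by blast+
    from trunc_path[OF this] show ?thesis unfolding f_def by (rule someI_ex)
  qed
  have hdin: "hd p \<in> set p" if "p \<in> P" for p using dpathsD[OF assms(1) that] unfolding is_path_succ by simp
  have inj: "inj_on f P"
  proof
    fix p q assume pq: "p \<in> P" "q \<in> P" "f p = f q"
    then have "hd p = hd q" using f[OF pq(1)] f[OF pq(2)] by simp
    then have "hd p \<in> set p \<inter> set q" using hdin[OF pq(1)] hdin[OF pq(2)] by simp
    then show "p = q" using dpathsD2[OF assms(1) pq(1,2)] by blast
  qed
  have "dpaths V E A B (f ` P)"
  proof (rule dpathsI)
    fix p' assume "p' \<in> f ` P"
    then obtain p where p: "p \<in> P" "p' = f p" by blast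
    show "is_path V E p' \<and> hd p' \<in> A \<and> last p' \<in> B" using f[OF p(1)] dpathsD[OF assms(1) p(1)] p(2) by simp
  next
    fix p' q' assume h: "p' \<in> f ` P" "q' \<in> f ` P" "p' \<noteq> q'"
    then obtain p q where pq: "p \<in> P" "q \<in> P" "p' = f p" "q' = f q" by blast
    then have "p \<noteq> q" using h(3) by blast
    then have "set p \<inter> set q = {}" using dpathsD2[OF assms(1) pq(1,2)] by blast
    then show "set p' \<inter> set q' = {}" using f[OF pq(1)] f[OF pq(2)] pq(3,4) by blast
  qed
  moreover have "card (f ` P) = card P" using inj by (rule card_image)
  moreover have "\<forall>p\<in>f ` P. set (butlast p) \<inter> B = {}" using f by blast
  ultimately show ?thesis using assms(2) by blast
qed

lemma dpaths_rev: "dpaths V E A B P \<Longrightarrow> dpaths V E B A (rev ` P)"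
  unfolding dpaths_def using path_rev by (fastforce simp: hd_rev last_rev)

lemma trunc_family_start:
  assumes "dpaths V E A B P" "finite P"
  shows "\<exists>P'. dpaths V E A B P' \<and> finite P' \<and> card P' = card P \<and> (\<forall>p\<in>P'. set (tl p) \<inter> A = {})"
proof -
  obtain P' where P': "dpaths V E B A P'" "finite P'" "card P' = card (rev ` P)" "\<forall>p\<in>P'. set (butlast p) \<inter> A = {}"
    using trunc_family[OF dpaths_rev[OF assms(1)]] assms(2) by blast
  have "dpaths V E A B (rev ` P')" using dpaths_rev[OF P'(1)] .
  moreover have "card (rev ` P') = card P" using P'(3) by (simp add: card_image)
  moreover have "\<forall>p\<in>rev ` P'. set (tl p) \<inter> A = {}"
  proof
    fix p assume "p \<in> rev ` P'"
    then obtain p' where "p' \<in> P'" "p = rev p'" by blast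
    moreover have "tl (rev p') = rev (butlast p')" by (metis butlast_rev rev_rev_ident)
    ultimately show "set (tl p) \<inter> A = {}" using P'(4) by simp
  qed
  ultimately show ?thesis using P'(2) by blast
qed




lemma path_join_ex:
  assumes "path_from_to V E a v q1" "path_from_to V E v b q2"
  shows "\<exists>q. path_from_to V E a b q \<and> set q \<subseteq> set q1 \<union> set q2"
proof -
  have p1: "q1 \<noteq> []" "set q1 \<subseteq> V" "successively (ed E) q1" "hd q1 = a" "last q1 = v"
    using assms(1) unfolding path_from_to_def is_path_succ by auto
  have p2: "q2 \<noteq> []" "set q2 \<subseteq> V" "successively (ed E) q2" "hd q2 = v" "last q2 = b"
    using assms(2) unfolding path_from_to_def is_path_succ by auto
  have c: "conn (set q1 \<union> set q2) E a v" unfolding conn_def using p1 by blast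
  have d: "conn (set q1 \<union> set q2) E v b" unfolding conn_def using p2 by blast
  obtain w where w: "w \<noteq> []" "set w \<subseteq> set q1 \<union> set q2" "successively (ed E) w" "hd w = a" "last w = b"
    using conn_trans[OF c d] unfolding conn_def by blast
  obtain q where q: "q \<noteq> []" "distinct q" "set q \<subseteq> set w" "successively (ed E) q" "hd q = a" "last q = b"
    using walk_to_path[OF w(1,3)] w(4,5) by auto
  have "path_from_to V E a b q" unfolding path_from_to_def is_path_succ using q w p1 p2 by auto
  then show ?thesis using q w by blast
qed

lemma key_sep:
  assumes S: "separates V E' S A B" and E': "E' = E - {{x,y}}"
    and noy: "\<not> (\<exists>a\<in>A. \<exists>q. path_from_to V E' a y q \<and> set q \<inter> S = {})"
    and T: "separates V E' T A (insert x S)" and xy: "x \<noteq> y"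
  shows "separates V E T A B"
  unfolding separates_def
proof (intro conjI ballI allI impI)
  show "T \<subseteq> V" using T unfolding separates_def by blast
next
  fix a b r assume a: "a \<in> A" and b: "b \<in> B" and r: "path_from_to V E a b r"
  have rp: "is_path V E r" "hd r = a" "last r = b" using r unfolding path_from_to_def by auto
  have dr: "distinct r" using rp(1) unfolding is_path_succ by blast
  have meet: "set r \<inter> insert x S \<noteq> {}"
  proof (cases "x \<in> set r")
    case True then show ?thesis by blast
  next
    case False
    then have "is_path V E' r" using path_avoid_edge[OF rp(1), of x y] E' by blast
    then have "set r \<inter> S \<noteq> {}" using S a b rp(2,3) unfolding separates_def path_from_to_def by blast
    then show ?thesis by blast
  qed
  then have ex: "\<exists>i. i < length r \<and> r ! i \<in> insert x S" by (metis disjoint_iff in_set_conv_nth)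
  define i where "i = (LEAST i. i < length r \<and> r ! i \<in> insert x S)"
  have "i < length r \<and> r ! i \<in> insert x S" using LeastI_ex[OF ex] unfolding i_def .
  then have i: "i < length r" "r ! i \<in> insert x S" by blast+
  have mi: "r ! j \<notin> insert x S" if "j < i" for j
  proof -
    have "\<not> (j < length r \<and> r ! j \<in> insert x S)"
      using not_less_Least[of j "\<lambda>i. i < length r \<and> r ! i \<in> insert x S"] that unfolding i_def by blast
    then show ?thesis using that i(1) by simp
  qed
  define q where "q = take (Suc i) r"
  have q: "is_path V E q" "hd q = a" "last q = r ! i" using path_take[OF rp(1) i(1)] rp(2) unfolding q_def by auto
  have qe: "q = take i r @ [r ! i]" unfolding q_def using i(1) by (simp add: take_Suc_conv_app_nth)
  have tk: "set (take i r) \<inter> insert x S = {}"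
  proof (rule ccontr)
    assume "set (take i r) \<inter> insert x S \<noteq> {}"
    then obtain z where z: "z \<in> set (take i r)" "z \<in> insert x S" by blast
    then obtain j where "j < length (take i r)" "take i r ! j = z" by (metis in_set_conv_nth)
    then have "j < i" "r ! j = z" by auto
    then show False using mi z(2) by metis
  qed
  show "set r \<inter> T \<noteq> {}"
  proof (cases "x \<in> set q \<and> y \<in> set q")
    case False
    then have "is_path V E' q" using path_avoid_edge[OF q(1), of x y] E' by blast
    then have "set q \<inter> T \<noteq> {}" using T a i(2) q(2,3) unfolding separates_def path_from_to_def by blast
    moreover have "set q \<subseteq> set r" unfolding q_def by (rule set_take_subset)
    ultimately show ?thesis by blast
  next
    case True
    have xi: "x = r ! i" using True tk qe by auto
    have yt: "y \<in> set (take i r)" using True tk qe xy by auto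
    then obtain j where "j < length (take i r)" "take i r ! j = y" by (metis in_set_conv_nth)
    then have j: "j < i" "r ! j = y" by auto
    have pp: "is_path V (E - {{r!j, r!i}}) (take (Suc j) r)" using path_split[OF rp(1) j(1) i(1)] by blast
    have "{r!j, r!i} = {x,y}" using xi j by auto
    then have "is_path V E' (take (Suc j) r)" using pp E' by simp
    moreover have "hd (take (Suc j) r) = a" "last (take (Suc j) r) = y"
      using path_take[OF rp(1), of j] j i(1) rp(2) by auto
    moreover have "set (take (Suc j) r) \<subseteq> set (take i r)" using j(1)
      by (simp add: set_take_subset_set_take)
    ultimately have "path_from_to V E' a y (take (Suc j) r) \<and> set (take (Suc j) r) \<inter> S = {}"
      unfolding path_from_to_def using tk by blast
    then show ?thesis using noy a by blast
  qed
qed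

lemma set_butlast_last: "p \<noteq> [] \<Longrightarrow> set p = insert (last p) (set (butlast p))"
  by (metis append_butlast_last_id list.simps(15) rotate1.simps(2) set_rotate1)

lemma set_hd_tl: "q \<noteq> [] \<Longrightarrow> set q = insert (hd q) (set (tl q))"
  by (metis list.collapse list.simps(15))

lemma glue:
  assumes P: "dpaths V E' A Sx P" "finite P" "card P = k" "\<forall>p\<in>P. set (butlast p) \<inter> Sx = {}"
    and Qs: "dpaths V E' Sy B Qs" "finite Qs" "card Qs = k" "\<forall>q\<in>Qs. set (tl q) \<inter> Sy = {}"
    and Sx: "Sx = insert x S" and Sy: "Sy = insert y S" and xS: "x \<notin> S" and yS: "y \<notin> S"
    and finS: "finite S" and cS: "card Sx = k"
    and cross: "\<forall>p\<in>P. \<forall>q\<in>Qs. set p \<inter> set q \<subseteq> S"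
    and exy: "{x,y} \<in> E" and EE: "E' \<subseteq> E"
  shows "\<exists>P'. dpaths V E A B P' \<and> finite P' \<and> card P' = k"
proof -
  have Pp: "is_path V E' p" "hd p \<in> A" "last p \<in> Sx" if "p \<in> P" for p using dpathsD[OF P(1) that] by blast+
  have Qp: "is_path V E' q" "hd q \<in> Sy" "last q \<in> B" if "q \<in> Qs" for q using dpathsD[OF Qs(1) that] by blast+
  have Pne: "p \<noteq> []" if "p \<in> P" for p using Pp(1)[OF that] unfolding is_path_succ by blast
  have Qne: "q \<noteq> []" if "q \<in> Qs" for q using Qp(1)[OF that] unfolding is_path_succ by blast
  have Pdis: "set p \<inter> set p' = {}" if "p \<in> P" "p' \<in> P" "p \<noteq> p'" for p p' using dpathsD2[OF P(1) that] .
  have Qdis: "set q \<inter> set q' = {}" if "q \<in> Qs" "q' \<in> Qs" "q \<noteq> q'" for q q' using dpathsD2[OF Qs(1) that] .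
  have Plast: "v = last p" if "p \<in> P" "v \<in> set p" "v \<in> Sx" for p v
    using set_butlast_last[OF Pne[OF that(1)]] that P(4) by blast
  have Qhd: "v = hd q" if "q \<in> Qs" "v \<in> set q" "v \<in> Sy" for q v
    using set_hd_tl[OF Qne[OF that(1)]] that Qs(4) by blast
  have injl: "inj_on last P"
  proof
    fix p p' assume h: "p \<in> P" "p' \<in> P" "last p = last p'"
    show "p = p'"
    proof (rule ccontr)
      assume "p \<noteq> p'"
      then have "set p \<inter> set p' = {}" using Pdis h by blast
      moreover have "last p \<in> set p" "last p' \<in> set p'" using Pne h(1,2) by simp_all
      ultimately show False using h(3) by auto
    qed
  qed
  have injh: "inj_on hd Qs"
  proof
    fix q q' assume h: "q \<in> Qs" "q' \<in> Qs" "hd q = hd q'"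
    show "q = q'"
    proof (rule ccontr)
      assume "q \<noteq> q'"
      then have "set q \<inter> set q' = {}" using Qdis h by blast
      moreover have "hd q \<in> set q" "hd q' \<in> set q'" using Qne h(1,2) by simp_all
      ultimately show False using h(3) by auto
    qed
  qed
  have finSy: "finite Sy" using finS Sy by simp
  have cSy: "card Sy = k" using cS Sx Sy xS yS finS by simp
  have hdQ: "hd ` Qs = Sy"
  proof (rule card_subset_eq[OF finSy])
    show "hd ` Qs \<subseteq> Sy" using Qp by blast
    show "card (hd ` Qs) = card Sy" using card_image[OF injh] Qs(3) cSy by simp
  qed
  define g where "g p = (if last p = x then y else last p)" for p
  have gS: "g p \<in> Sy" if "p \<in> P" for p using Pp(3)[OF that] Sx Sy unfolding g_def by auto
  have gy: "g p = y \<longleftrightarrow> last p = x" if "p \<in> P" for p using Pp(3)[OF that] Sx yS unfolding g_def by auto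
  have ginj: "g p = g p' \<Longrightarrow> p = p'" if "p \<in> P" "p' \<in> P" for p p'
  proof -
    assume gg: "g p = g p'"
    have "last p = last p'"
    proof (cases "last p = x")
      case True then have "last p' = x" using gy[OF that(1)] gy[OF that(2)] gg by simp
      then show ?thesis using True by simp
    next
      case False then have "last p' \<noteq> x" using gy[OF that(1)] gy[OF that(2)] gg by simp
      then show ?thesis using False gg unfolding g_def by simp
    qed
    then show "p = p'" using inj_onD[OF injl _ that] by blast
  qed
  define \<sigma> where "\<sigma> p = (THE q. q \<in> Qs \<and> hd q = g p)" for p
  have \<sigma>: "\<sigma> p \<in> Qs \<and> hd (\<sigma> p) = g p" if pP0: "p \<in> P" for p
  proof -
    obtain q where q: "q \<in> Qs" "hd q = g p" using gS[OF pP0] hdQ by (metis imageE)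
    have "\<exists>!q. q \<in> Qs \<and> hd q = g p"
    proof (rule ex1I[of _ q])
      show "q \<in> Qs \<and> hd q = g p" using q by blast
      fix q' assume "q' \<in> Qs \<and> hd q' = g p"
      then show "q' = q" using inj_onD[OF injh, of q' q] q by simp
    qed
    then show ?thesis unfolding \<sigma>_def by (rule theI')
  qed
  define gl where "gl p = (if last p = x then p @ \<sigma> p else p @ tl (\<sigma> p))" for p
  have gl: "is_path V E (gl p) \<and> hd (gl p) = hd p \<and> last (gl p) = last (\<sigma> p) \<and> set (gl p) \<subseteq> set p \<union> set (\<sigma> p)"
    if pP: "p \<in> P" for p
  proof -
    define q where "q = \<sigma> p"
    have qQ: "q \<in> Qs" and hq: "hd q = g p" using \<sigma>[OF pP] unfolding q_def by auto
    have pE: "is_path V E p" using path_mono[OF Pp(1)[OF pP] _ EE] by blast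
    have qE: "is_path V E q" using path_mono[OF Qp(1)[OF qQ] _ EE] by blast
    show ?thesis
    proof (cases "last p = x")
      case True
      have hqy: "hd q = y" using hq True unfolding g_def by simp
      have disj: "set p \<inter> set q = {}"
      proof (rule ccontr)
        assume "set p \<inter> set q \<noteq> {}"
        then obtain v where v: "v \<in> set p" "v \<in> set q" by blast
        then have "v \<in> S" using cross pP qQ by blast
        then have "v = hd q" using Qhd[OF qQ v(2)] Sy by blast
        then show False using hqy yS \<open>v \<in> S\<close> by simp
      qed
      have xp: "x \<in> set p" using True Pne[OF pP] by (metis last_in_set)
      have xV: "x \<in> V" using xp Pp(1)[OF pP] unfolding is_path_succ by blast
      have q'p: "is_path V E (x # q)"
        using qE xV disj xp exy hqy Qne[OF qQ] unfolding is_path_succ by (auto simp: successively_Cons)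
      have j: "is_path V E (p @ tl (x # q)) \<and> hd (p @ tl (x # q)) = hd p \<and> last (p @ tl (x # q)) = last (x # q) \<and> set (p @ tl (x # q)) \<subseteq> set p \<union> set (x # q)"
        using path_join[OF pE q'p] True disj by simp
      then show ?thesis using True xp Qne[OF qQ] unfolding gl_def q_def by auto
    next
      case False
      have disj: "set p \<inter> set (tl q) = {}"
      proof (rule ccontr)
        assume "set p \<inter> set (tl q) \<noteq> {}"
        then obtain v where v: "v \<in> set p" "v \<in> set (tl q)" by blast
        then have "v \<in> set q" using set_hd_tl[OF Qne[OF qQ]] by blast
        then have "v \<in> S" using cross pP qQ v(1) by blast
        then show False using Qs(4) qQ v(2) Sy by blast
      qed
      have "last p = hd q" using hq False unfolding g_def by simp
      from path_join[OF pE qE this disj] show ?thesis using False unfolding gl_def q_def by simp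
    qed
  qed
  have cr: "set p \<inter> set (\<sigma> p') = {}" if "p \<in> P" "p' \<in> P" "p \<noteq> p'" for p p'
  proof (rule ccontr)
    assume "set p \<inter> set (\<sigma> p') \<noteq> {}"
    then obtain v where v: "v \<in> set p" "v \<in> set (\<sigma> p')" by blast
    have sq: "\<sigma> p' \<in> Qs" "hd (\<sigma> p') = g p'" using \<sigma>[OF that(2)] by auto
    have vS: "v \<in> S" using cross that(1) sq(1) v by blast
    have v1: "v = last p" using Plast[OF that(1) v(1)] vS Sx by blast
    have v2: "v = g p'" using Qhd[OF sq(1) v(2)] vS Sy sq(2) by blast
    have "last p' \<noteq> x" using v2 vS yS gy[OF that(2)] by auto
    then have "g p' = last p'" unfolding g_def by simp
    then have "last p = last p'" using v1 v2 by simp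
    then show False using inj_onD[OF injl _ that(1,2)] that(3) by blast
  qed
  have "dpaths V E A B (gl ` P)"
  proof (rule dpathsI)
    fix r assume "r \<in> gl ` P"
    then obtain p where p: "p \<in> P" "r = gl p" by blast
    show "is_path V E r \<and> hd r \<in> A \<and> last r \<in> B"
      using gl[OF p(1)] p(2) Pp(2)[OF p(1)] Qp(3)[of "\<sigma> p"] \<sigma>[OF p(1)] by simp
  next
    fix r r' assume h: "r \<in> gl ` P" "r' \<in> gl ` P" "r \<noteq> r'"
    then obtain p p' where pp: "p \<in> P" "p' \<in> P" "r = gl p" "r' = gl p'" by blast
    then have ne: "p \<noteq> p'" using h(3) by metis
    have s1: "set r \<subseteq> set p \<union> set (\<sigma> p)" "set r' \<subseteq> set p' \<union> set (\<sigma> p')" using gl[OF pp(1)] gl[OF pp(2)] pp(3,4) by simp_all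
    have d1: "set p \<inter> set p' = {}" using Pdis[OF pp(1,2) ne] .
    have d2: "set (\<sigma> p) \<inter> set (\<sigma> p') = {}"
    proof -
      have "g p \<noteq> g p'" using ginj[OF pp(1,2)] ne by blast
      then have "\<sigma> p \<noteq> \<sigma> p'" using \<sigma>[OF pp(1)] \<sigma>[OF pp(2)] by auto
      then show ?thesis using Qdis[of "\<sigma> p" "\<sigma> p'"] \<sigma>[OF pp(1)] \<sigma>[OF pp(2)] by blast
    qed
    have d3: "set p \<inter> set (\<sigma> p') = {}" using cr[OF pp(1,2) ne] .
    have d4: "set p' \<inter> set (\<sigma> p) = {}" using cr[OF pp(2,1)] ne by blast
    show "set r \<inter> set r' = {}" using s1 d1 d2 d3 d4 by blast
  qed
  moreover have "inj_on gl P"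
  proof
    fix p p' assume h: "p \<in> P" "p' \<in> P" "gl p = gl p'"
    have "hd (gl p) = hd p" using gl[OF h(1)] by blast
    moreover have "hd (gl p') = hd p'" using gl[OF h(2)] by blast
    ultimately have e: "hd p = hd p'" using h(3) by simp
    have "hd p \<in> set p" "hd p' \<in> set p'" using Pne[OF h(1)] Pne[OF h(2)] by simp_all
    then have "hd p \<in> set p \<inter> set p'" using e by simp
    then show "p = p'" using Pdis[OF h(1,2)] by auto
  qed
  then have "card (gl ` P) = k" using P(3) by (simp add: card_image)
  moreover have "finite (gl ` P)" using P(2) by simp
  ultimately show ?thesis by blast
qed




lemma prefix_path:
  assumes "is_path V E p" "v \<in> set p"
  shows "\<exists>q. path_from_to V E (hd p) v q \<and> set q \<subseteq> insert v (set (butlast p))"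
proof -
  obtain i where i: "i < length p" "p ! i = v" using assms(2) by (metis in_set_conv_nth)
  have t: "is_path V E (take (Suc i) p) \<and> hd (take (Suc i) p) = hd p \<and> last (take (Suc i) p) = p ! i"
    using path_take[OF assms(1) i(1)] .
  have e: "take (Suc i) p = take i p @ [p ! i]" using i(1) by (simp add: take_Suc_conv_app_nth)
  have "take i p = take i (butlast p)" using i(1) by (simp add: take_butlast)
  then have "set (take i p) \<subseteq> set (butlast p)" by (metis set_take_subset)
  then have "set (take (Suc i) p) \<subseteq> insert v (set (butlast p))" using e i(2) by auto
  then show ?thesis using t i(2) unfolding path_from_to_def by blast
qed

lemma suffix_path:
  assumes "is_path V E q" "v \<in> set q"
  shows "\<exists>r. path_from_to V E v (last q) r \<and> set r \<subseteq> insert v (set (tl q))"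
proof -
  have rq: "is_path V E (rev q)" using path_rev[OF assms(1)] .
  have ne: "q \<noteq> []" using assms(1) unfolding is_path_succ by blast
  obtain r where r: "path_from_to V E (hd (rev q)) v r" "set r \<subseteq> insert v (set (butlast (rev q)))"
    using prefix_path[OF rq] assms(2) by auto
  have "path_from_to V E v (last q) (rev r)"
    using r(1) path_rev unfolding path_from_to_def
    by (metis hd_rev last_rev ne is_path_succ rev_is_Nil_conv)
  moreover have "set (rev r) \<subseteq> insert v (set (tl q))" using r(2) by simp
  ultimately show ?thesis by blast
qed

lemma in_path_ends: "path_from_to V E a b q \<Longrightarrow> a \<in> set q \<and> b \<in> set q"
  unfolding path_from_to_def is_path_succ by auto




theorem menger:
  assumes "graph V E" "\<forall>S. separates V E S A B \<longrightarrow> k \<le> card S"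
  shows "\<exists>P. dpaths V E A B P \<and> finite P \<and> card P = k"
  using assms
proof (induction "card E" arbitrary: E A B k rule: less_induct)
  case less
  have G: "graph V E" and H: "\<forall>S. separates V E S A B \<longrightarrow> k \<le> card S" using less.prems by blast+
  have finV: "finite V" using G unfolding graph_def by blast
  show ?case
  proof (cases "E = {}")
    case True
    define D where "D = A \<inter> B \<inter> V"
    have "separates V E D A B"
      unfolding separates_def
    proof (intro conjI ballI allI impI)
      show "D \<subseteq> V" unfolding D_def by blast
    next
      fix a b p assume a: "a \<in> A" "b \<in> B" and p: "path_from_to V E a b p"
      have pp: "p \<noteq> []" "set p \<subseteq> V" "successively (ed E) p" "hd p = a" "last p = b"
        using p unfolding path_from_to_def is_path_succ by auto
      have "p = [a]"
      proof (cases p)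
        case Nil then show ?thesis using pp by simp
      next
        case (Cons c rest)
        then show ?thesis using pp True by (cases rest) auto
      qed
      then show "set p \<inter> D \<noteq> {}" using pp a unfolding D_def by auto
    qed
    then have "k \<le> card D" using H by blast
    then obtain D' where D': "D' \<subseteq> D" "card D' = k" "finite D'" by (rule obtain_subset_with_card_n)
    define P where "P = (\<lambda>v. [v]) ` D'"
    have "dpaths V E A B P"
    proof (rule dpathsI)
      fix p assume "p \<in> P"
      then obtain v where "v \<in> D'" "p = [v]" unfolding P_def by blast
      then show "is_path V E p \<and> hd p \<in> A \<and> last p \<in> B" using D'(1) unfolding D_def is_path_succ by auto
    next
      fix p q assume "p \<in> P" "q \<in> P" "p \<noteq> q"
      then show "set p \<inter> set q = {}" unfolding P_def by auto
    qed
    moreover have "card P = k" unfolding P_def using D'(2) by (simp add: card_image inj_on_def)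
    moreover have "finite P" unfolding P_def using D'(3) by simp
    ultimately show ?thesis by blast
  next
    case False
    then obtain e where eE: "e \<in> E" by blast
    then obtain x0 y0 where e: "e = {x0,y0}" "x0 \<noteq> y0" "x0 \<in> V" "y0 \<in> V" using G unfolding graph_def by meson
    define E' where "E' = E - {e}"
    have finE: "finite E" using graph_finite_E[OF G] .
    have cE: "card E' < card E" unfolding E'_def by (rule card_Diff1_less[OF finE eE])
    have G': "graph V E'" using graph_sub[OF G] unfolding E'_def by blast
    have EE: "E' \<subseteq> E" unfolding E'_def by blast
    show ?thesis
    proof (cases "\<forall>S. separates V E' S A B \<longrightarrow> k \<le> card S")
      case True
      obtain P where P: "dpaths V E' A B P" "finite P" "card P = k" using less.hyps[OF cE G' True] by blast
      have "dpaths V E A B P"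
      proof (rule dpathsI)
        fix p assume "p \<in> P" then show "is_path V E p \<and> hd p \<in> A \<and> last p \<in> B"
          using dpathsD[OF P(1)] path_mono[OF _ _ EE] by blast
      next
        fix p q assume "p \<in> P" "q \<in> P" "p \<noteq> q" then show "set p \<inter> set q = {}" using dpathsD2[OF P(1)] by blast
      qed
      then show ?thesis using P by blast
    next
      case False
      then obtain S where S: "separates V E' S A B" "card S < k" by force
      have SV: "S \<subseteq> V" using S(1) unfolding separates_def by blast
      have finS: "finite S" using finite_subset[OF SV finV] .
      have "\<not> separates V E S A B" using H S(2) by force
      then obtain a b p where ab: "a \<in> A" "b \<in> B" and p: "path_from_to V E a b p" and pS: "set p \<inter> S = {}"
        using SV unfolding separates_def by blast
      have pp: "is_path V E p" "hd p = a" "last p = b" using p unfolding path_from_to_def by auto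
      define R where "R = {v. \<exists>a\<in>A. \<exists>q. path_from_to V E' a v q \<and> set q \<inter> S = {}}"
      define Q where "Q = {v. \<exists>b\<in>B. \<exists>q. path_from_to V E' v b q \<and> set q \<inter> S = {}}"
      have RQ: "R \<inter> Q = {}"
      proof (rule ccontr)
        assume "R \<inter> Q \<noteq> {}"
        then obtain v a' b' q1 q2 where h: "a' \<in> A" "b' \<in> B" "path_from_to V E' a' v q1" "set q1 \<inter> S = {}"
          "path_from_to V E' v b' q2" "set q2 \<inter> S = {}"
          unfolding R_def Q_def by blast
        then obtain q where q: "path_from_to V E' a' b' q" "set q \<subseteq> set q1 \<union> set q2" using path_join_ex by metis
        then have "set q \<inter> S = {}" using h(4,6) by blast
        then show False using S(1) h(1,2) q(1) unfolding separates_def by blast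
      qed
      have both: "x0 \<in> set p \<and> y0 \<in> set p"
      proof (rule ccontr)
        assume "\<not> (x0 \<in> set p \<and> y0 \<in> set p)"
        then have "is_path V E' p" using path_avoid_edge[OF pp(1)] e(1) unfolding E'_def by blast
        then have "set p \<inter> S \<noteq> {}" using S(1) ab pp(2,3) unfolding separates_def path_from_to_def by blast
        then show False using pS by blast
      qed
      have orient: "p ! i \<in> R \<and> p ! j \<in> Q" if ij: "i < j" "j < length p" "{p!i, p!j} = e" for i j
      proof -
        have sp: "is_path V E' (take (Suc i) p)" "is_path V E' (drop j p)"
          using path_split[OF pp(1) ij(1,2)] ij(3) unfolding E'_def by auto
        have t: "hd (take (Suc i) p) = a" "last (take (Suc i) p) = p ! i"
          using path_take[OF pp(1), of i] ij pp(2) by auto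
        have d: "hd (drop j p) = p ! j" "last (drop j p) = b" using path_drop[OF pp(1) ij(2)] pp(3) by auto
        have s1: "set (take (Suc i) p) \<inter> S = {}" using pS set_take_subset[of "Suc i" p] by blast
        have s2: "set (drop j p) \<inter> S = {}" using pS set_drop_subset[of j p] by blast
        have "path_from_to V E' a (p ! i) (take (Suc i) p)" unfolding path_from_to_def using sp(1) t by simp
        then have 1: "p ! i \<in> R" unfolding R_def using ab(1) s1 by blast
        have "path_from_to V E' (p ! j) b (drop j p)" unfolding path_from_to_def using sp(2) d by simp
        then have 2: "p ! j \<in> Q" unfolding Q_def using ab(2) s2 by blast
        show ?thesis using 1 2 by blast
      qed
      obtain i0 j0 where ij0: "i0 < length p" "p ! i0 = x0" "j0 < length p" "p ! j0 = y0"
        using both by (metis in_set_conv_nth)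
      have "i0 \<noteq> j0" using ij0(2,4) e(2) by metis
      have "\<exists>x y. e = {x,y} \<and> x \<in> R \<and> y \<in> Q"
      proof (cases "i0 < j0")
        case True
        have "{p ! i0, p ! j0} = e" using ij0 e(1) by simp
        then have "p ! i0 \<in> R \<and> p ! j0 \<in> Q" using orient[OF True ij0(3)] by blast
        then show ?thesis using ij0 e(1) by (intro exI[of _ x0] exI[of _ y0]) simp
      next
        case False then have ji: "j0 < i0" using \<open>i0 \<noteq> j0\<close> by simp
        have "{p ! j0, p ! i0} = e" using ij0 e(1) by (simp add: insert_commute)
        then have "p ! j0 \<in> R \<and> p ! i0 \<in> Q" using orient[OF ji ij0(1)] by blast
        then show ?thesis using ij0 e(1) by (intro exI[of _ y0] exI[of _ x0]) (simp add: insert_commute)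
      qed
      then obtain x y where xy: "e = {x,y}" "x \<in> R" "y \<in> Q" by blast
      have xny: "x \<noteq> y"
      proof
        assume "x = y" then have "e = {x}" using xy(1) by simp
        moreover have "x0 \<in> e" "y0 \<in> e" using e(1) by simp_all
        ultimately show False using e(2) by simp
      qed
      have xS: "x \<notin> S"
      proof -
        obtain a1 q1 where "path_from_to V E' a1 x q1" "set q1 \<inter> S = {}" using xy(2) unfolding R_def by blast
        then show ?thesis using in_path_ends[of V E' a1 x q1] by blast
      qed
      have yS: "y \<notin> S"
      proof -
        obtain b1 q1 where "path_from_to V E' y b1 q1" "set q1 \<inter> S = {}" using xy(3) unfolding Q_def by blast
        then show ?thesis using in_path_ends[of V E' y b1 q1] by blast
      qed
      have xQ: "x \<notin> Q" and yR: "y \<notin> R" using RQ xy by blast+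
      define Sx where "Sx = insert x S"
      define Sy where "Sy = insert y S"
      have E'xy: "E' = E - {{x,y}}" unfolding E'_def using xy(1) by simp
      have "x \<in> e" "y \<in> e" using xy(1) by simp_all
      then have xV: "x \<in> V" and yV: "y \<in> V" using e(1,3,4) by auto
      have sepx: "separates V E Sx A B"
        unfolding separates_def
      proof (intro conjI ballI allI impI)
        show "Sx \<subseteq> V" unfolding Sx_def using SV xV by blast
      next
        fix a b r assume h: "a \<in> A" "b \<in> B" "path_from_to V E a b r"
        show "set r \<inter> Sx \<noteq> {}"
        proof (cases "x \<in> set r")
          case True then show ?thesis unfolding Sx_def by blast
        next
          case False
          then have "is_path V E' r" using path_avoid_edge[of V E r x y] h(3) E'xy unfolding path_from_to_def by blast
          then have "set r \<inter> S \<noteq> {}" using S(1) h unfolding separates_def path_from_to_def by blast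
          then show ?thesis unfolding Sx_def by blast
        qed
      qed
      have cSx: "card Sx = Suc (card S)" unfolding Sx_def using finS xS by simp
      have cSy: "card Sy = Suc (card S)" unfolding Sy_def using finS yS by simp
      have kk: "k = card Sx" using H sepx S(2) cSx by force
      have c1: "\<forall>T. separates V E' T A Sx \<longrightarrow> k \<le> card T"
      proof (intro allI impI)
        fix T assume T: "separates V E' T A Sx"
        have noy: "\<not> (\<exists>a\<in>A. \<exists>q. path_from_to V E' a y q \<and> set q \<inter> S = {})" using yR unfolding R_def by blast
        have "separates V E T A B" using key_sep[OF S(1) E'xy noy T[unfolded Sx_def] xny] .
        then show "k \<le> card T" using H by blast
      qed
      have c2: "\<forall>T. separates V E' T Sy B \<longrightarrow> k \<le> card T"
      proof (intro allI impI)
        fix T assume T: "separates V E' T Sy B"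
        have T': "separates V E' T B (insert y S)" using separates_sym[OF T] unfolding Sy_def .
        have nox: "\<not> (\<exists>b\<in>B. \<exists>q. path_from_to V E' b x q \<and> set q \<inter> S = {})"
        proof
          assume "\<exists>b\<in>B. \<exists>q. path_from_to V E' b x q \<and> set q \<inter> S = {}"
          then obtain b q where "b \<in> B" "path_from_to V E' b x q" "set q \<inter> S = {}" by blast
          then have "path_from_to V E' x b (rev q)" "set (rev q) \<inter> S = {}"
            using path_rev unfolding path_from_to_def is_path_succ by (auto simp: hd_rev last_rev)
          then show False using xQ \<open>b \<in> B\<close> unfolding Q_def by blast
        qed
        have E'yx: "E' = E - {{y,x}}" using E'xy by (simp add: insert_commute)
        have "separates V E T B A" using key_sep[OF separates_sym[OF S(1)] E'yx nox T' xny[symmetric]] .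
        then have "separates V E T A B" by (rule separates_sym)
        then show "k \<le> card T" using H by blast
      qed
      obtain P0 where P0: "dpaths V E' A Sx P0" "finite P0" "card P0 = k" using less.hyps[OF cE G' c1] by blast
      obtain P where P: "dpaths V E' A Sx P" "finite P" "card P = k" "\<forall>p\<in>P. set (butlast p) \<inter> Sx = {}"
        using trunc_family[OF P0(1,2)] P0(3) by auto
      obtain Q0 where Q0: "dpaths V E' Sy B Q0" "finite Q0" "card Q0 = k" using less.hyps[OF cE G' c2] by blast
      obtain Qs where Qs: "dpaths V E' Sy B Qs" "finite Qs" "card Qs = k" "\<forall>q\<in>Qs. set (tl q) \<inter> Sy = {}"
        using trunc_family_start[OF Q0(1,2)] Q0(3) by auto
      have cross: "\<forall>p\<in>P. \<forall>q\<in>Qs. set p \<inter> set q \<subseteq> S"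
      proof (intro ballI subsetI)
        fix p q v assume h: "p \<in> P" "q \<in> Qs" "v \<in> set p \<inter> set q"
        show "v \<in> S"
        proof (rule ccontr)
          assume vS: "v \<notin> S"
          have pP: "is_path V E' p" "hd p \<in> A" using dpathsD[OF P(1) h(1)] by blast+
          obtain r1 where r1: "path_from_to V E' (hd p) v r1" "set r1 \<subseteq> insert v (set (butlast p))"
            using prefix_path[OF pP(1)] h(3) by blast
          have "set r1 \<inter> S = {}" using r1(2) vS P(4) h(1) unfolding Sx_def by blast
          then have vR: "v \<in> R" unfolding R_def using r1(1) pP(2) by blast
          have qQ: "is_path V E' q" "last q \<in> B" using dpathsD[OF Qs(1) h(2)] by blast+
          obtain r2 where r2: "path_from_to V E' v (last q) r2" "set r2 \<subseteq> insert v (set (tl q))"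
            using suffix_path[OF qQ(1)] h(3) by blast
          have "set r2 \<inter> S = {}" using r2(2) vS Qs(4) h(2) unfolding Sy_def by blast
          then have vQ: "v \<in> Q" unfolding Q_def using r2(1) qQ(2) by blast
          show False using RQ vR vQ by blast
        qed
      qed
      have exy: "{x,y} \<in> E" using xy(1) eE by simp
      show ?thesis
        using glue[OF P Qs Sx_def Sy_def xS yS finS kk[symmetric] cross exy EE] .
    qed
  qed
qed




lemma conn_walk:
  assumes "p \<noteq> []" "successively (ed F) p" "w \<in> set p"
  shows "conn (set p) F (hd p) w"
proof -
  obtain i where i: "i < length p" "p ! i = w" using assms(3) by (metis in_set_conv_nth)
  have "take (Suc i) p \<noteq> []" using assms(1) by simp
  moreover have "set (take (Suc i) p) \<subseteq> set p" by (rule set_take_subset)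
  moreover have "successively (ed F) (take (Suc i) p)" using succ_take[OF assms(2)] .
  moreover have "hd (take (Suc i) p) = hd p" using assms(1) by simp
  moreover have "last (take (Suc i) p) = w" using i by (simp add: take_Suc_conv_app_nth)
  ultimately show ?thesis unfolding conn_def by blast
qed

lemma conn_all:
  assumes "c \<in> D" "\<And>v. v \<in> D \<Longrightarrow> conn D F c v" "u \<in> D" "v \<in> D"
  shows "conn D F u v"
  using conn_trans[OF conn_sym[OF assms(2)[OF assms(3)]] assms(2)[OF assms(4)]] .

lemma union_conn:
  assumes "successively (ed E) p" "p \<noteq> []"
    and "\<forall>v\<in>set p. \<forall>u\<in>T v. \<forall>w\<in>T v. conn (T v) ET u w"
    and "\<forall>u w. {u,w} \<in> E \<longrightarrow> (\<exists>s\<in>T u. \<exists>s'\<in>T w. s = s' \<or> {s,s'} \<in> ET)"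
    and "s1 \<in> T (hd p)" "s2 \<in> T (last p)"
  shows "conn (\<Union>v\<in>set p. T v) ET s1 s2"
  using assms
proof (induction p arbitrary: s1 rule: induct_list012)
  case 1 then show ?case by simp
next
  case (2 v)
  have "conn (T v) ET s1 s2" using 2 by simp
  then show ?case by (rule conn_mono) simp
next
  case (3 v w rest)
  have vw: "{v,w} \<in> E" using "3.prems"(1) by simp
  obtain s s' where ss: "s \<in> T v" "s' \<in> T w" "s = s' \<or> {s,s'} \<in> ET" using "3.prems"(4) vw by blast
  let ?U = "\<Union>x\<in>set (v # w # rest). T x"
  have Tv: "T v \<subseteq> ?U" by auto
  have Tw: "(\<Union>x\<in>set (w # rest). T x) \<subseteq> ?U" by auto
  have s1v: "s1 \<in> T v" using "3.prems"(5) by simp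
  have cv: "\<forall>u\<in>T v. \<forall>w\<in>T v. conn (T v) ET u w" using "3.prems"(3) by simp
  have c1: "conn ?U ET s1 s"
    using conn_mono[OF _ Tv] cv s1v ss(1) by blast
  have sU: "s \<in> ?U" "s' \<in> ?U" using ss(1,2) by auto
  have c2: "conn ?U ET s s'"
  proof (cases "s = s'")
    case True then show ?thesis using conn_refl[OF sU(1)] by simp
  next
    case False then have "{s,s'} \<in> ET" using ss(3) by blast
    then show ?thesis using conn_edge[OF sU] by blast
  qed
  have p1: "successively (ed E) (w # rest)" using "3.prems"(1) by simp
  have p3: "\<forall>v\<in>set (w # rest). \<forall>u\<in>T v. \<forall>w\<in>T v. conn (T v) ET u w" using "3.prems"(3) by simp
  have p6: "s2 \<in> T (last (w # rest))" using "3.prems"(6) by simp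
  have "conn (\<Union>x\<in>set (w # rest). T x) ET s' s2"
    using "3.IH"(2)[OF p1 _ p3 "3.prems"(4) _ p6] ss(2) by simp
  then have c3: "conn ?U ET s' s2" using conn_mono[OF _ Tw] by blast
  show ?case using conn_trans[OF conn_trans[OF c1 c2] c3] .
qed

lemma internal_degree:
  assumes "graph N ET" "is_path N ET p" "s \<in> set p" "s \<noteq> hd p" "s \<noteq> last p"
  shows "2 \<le> degree ET s"
proof -
  obtain i where i: "i < length p" "p ! i = s" using assms(3) by (metis in_set_conv_nth)
  have ne: "p \<noteq> []" using assms(2) unfolding is_path_def by blast
  have i0: "i \<noteq> 0" using i assms(4) ne by (metis hd_conv_nth)
  have i1: "Suc i < length p"
  proof (rule ccontr)
    assume "\<not> Suc i < length p"
    then have "i = length p - 1" using i(1) by simp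
    then show False using i(2) assms(5) ne by (simp add: last_conv_nth)
  qed
  have d: "distinct p" using assms(2) unfolding is_path_def by blast
  have e1: "{p ! (i - 1), p ! i} \<in> ET" using assms(2) i0 i(1) unfolding is_path_def
    by (metis Suc_pred' i1 less_trans_Suc not_gr_zero)
  have e2: "{p ! i, p ! Suc i} \<in> ET" using assms(2) i1 unfolding is_path_def by blast
  have n1: "p ! (i - 1) \<noteq> p ! Suc i" using d i1 i0 nth_eq_iff_index_eq by fastforce
  have n2: "p ! (i - 1) \<noteq> p ! i" using d i(1) i0 nth_eq_iff_index_eq by fastforce
  have neq: "{p ! (i - 1), p ! i} \<noteq> {p ! i, p ! Suc i}"
  proof
    assume "{p ! (i - 1), p ! i} = {p ! i, p ! Suc i}"
    then have "p ! (i - 1) \<in> {p ! i, p ! Suc i}" by blast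
    then show False using n1 n2 by blast
  qed
  have fin: "finite {e \<in> ET. s \<in> e}" using graph_finite_E[OF assms(1)] by simp
  have sub: "{{p ! (i - 1), p ! i}, {p ! i, p ! Suc i}} \<subseteq> {e \<in> ET. s \<in> e}" using e1 e2 i(2) by auto
  have "card {{p ! (i - 1), p ! i}, {p ! i, p ! Suc i}} = 2" using neq by simp
  then show ?thesis unfolding degree_def using card_mono[OF fin sub] by simp
qed




theorem lemma2p8:
  fixes V :: "'a set" and E :: "'a set set"
    and N :: "'b set" and ET :: "'b set set" and lhat :: "'b \<Rightarrow> 'a set"
    and X C :: "'a set" and t :: 'b
  assumes "graph V E"
    and "vine_decomposition V E N ET lhat"
    and "X \<subseteq> V"
    and "component (V - X) (induced_edges E (V - X)) C"
    and "t \<in> N"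
    and "lhat t \<inter> C = {}"
    and "\<forall>S. separates V E S X (lhat t) \<longrightarrow> card X \<le> card S"
  shows "\<exists>l. vine_decomposition (X \<union> C) (induced_edges E (X \<union> C)) N ET l \<and>
             l t = X \<and>
             (\<forall>s. leaf N ET s \<and> s \<noteq> t \<longrightarrow> l s \<subseteq> lhat s) \<and>
             (\<forall>s\<in>N. card (l s) \<le> card (lhat s))"
proof -
  note G = assms(1) and XV = assms(3) and tN = assms(5) and tC = assms(6)
  have tree: "tree N ET" and lV: "\<forall>s\<in>N. lhat s \<subseteq> V"
    and Tv: "\<forall>v\<in>V. nodes_of N lhat v \<noteq> {} \<and> connected_in N ET (nodes_of N lhat v)"
    and Te: "\<forall>u v. {u, v} \<in> E \<longrightarrow> (\<exists>s\<in>nodes_of N lhat u. \<exists>s'\<in>nodes_of N lhat v. s = s' \<or> {s, s'} \<in> ET)"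
    using assms(2) unfolding vine_decomposition_def by blast+
  have GT: "graph N ET" and uniq: "\<forall>u\<in>N. \<forall>v\<in>N. \<exists>!p. path_from_to N ET u v p"
    using tree unfolding tree_def by blast+
  have finV: "finite V" using G unfolding graph_def by blast
  have Cne: "C \<noteq> {}" and Ccon: "connected_in (V - X) (induced_edges E (V - X)) C"
    and Cmax: "\<forall>D. C \<subseteq> D \<and> connected_in (V - X) (induced_edges E (V - X)) D \<longrightarrow> D = C"
    using assms(4) unfolding component_def by blast+
  have CVX: "C \<subseteq> V - X" using Ccon unfolding connected_in_def by blast
  define tp where "tp a b = (THE p. path_from_to N ET a b p)" for a b
  have tp: "path_from_to N ET a b (tp a b)" if "a \<in> N" "b \<in> N" for a b
    unfolding tp_def using uniq that by (metis theI')
  have tpu: "p = tp a b" if "path_from_to N ET a b p" for a b p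
  proof -
    have "a \<in> N" "b \<in> N" using that unfolding path_from_to_def is_path_succ by auto
    then show ?thesis unfolding tp_def using uniq that by (metis the1_equality)
  qed
  obtain PP where PP: "dpaths V E X (lhat t) PP" "finite PP" "card PP = card X"
    using menger[OF G assms(7)] by blast
  have finX: "finite X" using finite_subset[OF XV finV] .
  have PPp: "is_path V E p" "hd p \<in> X" "last p \<in> lhat t" if "p \<in> PP" for p using dpathsD[OF PP(1) that] by blast+
  have PPne: "p \<noteq> []" if "p \<in> PP" for p using PPp(1)[OF that] unfolding is_path_succ by blast
  have injh: "inj_on hd PP"
  proof
    fix p q assume h: "p \<in> PP" "q \<in> PP" "hd p = hd q"
    show "p = q"
    proof (rule ccontr)
      assume "p \<noteq> q"
      then have "set p \<inter> set q = {}" using dpathsD2[OF PP(1) h(1,2)] by blast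
      moreover have "hd p \<in> set p" "hd q \<in> set q" using PPne[OF h(1)] PPne[OF h(2)] by simp_all
      ultimately show False using h(3) by auto
    qed
  qed
  have hdPP: "hd ` PP = X"
  proof (rule card_subset_eq[OF finX])
    show "hd ` PP \<subseteq> X" using PPp(2) by blast
    show "card (hd ` PP) = card X" using card_image[OF injh] PP(3) by simp
  qed
  define Px where "Px x = (THE p. p \<in> PP \<and> hd p = x)" for x
  have Px: "Px x \<in> PP \<and> hd (Px x) = x" if xX: "x \<in> X" for x
  proof -
    obtain p where p: "p \<in> PP" "hd p = x" using xX hdPP by (metis imageE)
    have "\<exists>!p. p \<in> PP \<and> hd p = x"
    proof (rule ex1I[of _ p])
      show "p \<in> PP \<and> hd p = x" using p by blast
      fix q assume "q \<in> PP \<and> hd q = x"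
      then show "q = p" using inj_onD[OF injh, of q p] p by simp
    qed
    then show ?thesis unfolding Px_def by (rule theI')
  qed
  have Pxdis: "set (Px x) \<inter> set (Px y) = {}" if "x \<in> X" "y \<in> X" "x \<noteq> y" for x y
  proof -
    have "Px x \<noteq> Px y" using Px[OF that(1)] Px[OF that(2)] that(3) by metis
    then show ?thesis using dpathsD2[OF PP(1)] Px[OF that(1)] Px[OF that(2)] by blast
  qed
  have Pxp: "is_path V E (Px x)" "hd (Px x) = x" "last (Px x) \<in> lhat t" "Px x \<noteq> []" if "x \<in> X" for x
    using Px[OF that] PPp PPne by blast+
  have PxX: "set (Px x) \<inter> X \<subseteq> {x}" if xX: "x \<in> X" for x
  proof
    fix z assume z: "z \<in> set (Px x) \<inter> X"
    show "z \<in> {x}"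
    proof (rule ccontr)
      assume "z \<notin> {x}"
      then have "set (Px x) \<inter> set (Px z) = {}" using Pxdis[OF xX] z by blast
      moreover have "z \<in> set (Px z)" using Pxp(2,4)[of z] z by (metis IntD2 list.set_sel(1))
      ultimately show False using z by blast
    qed
  qed
  have PxC: "set (Px x) \<inter> C = {}" if xX: "x \<in> X" for x
  proof (rule ccontr)
    assume "set (Px x) \<inter> C \<noteq> {}"
    then obtain c where c: "c \<in> set (Px x)" "c \<in> C" by blast
    let ?p = "Px x"
    obtain i where i: "i < length ?p" "?p ! i = c" using c(1) by (metis in_set_conv_nth)
    have d: "distinct ?p" using Pxp(1)[OF xX] unfolding is_path_succ by blast
    have i0: "i \<noteq> 0" using i Pxp(2,4)[OF xX] c(2) CVX xX by (metis DiffD2 hd_conv_nth subsetD)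
    define r where "r = drop i ?p"
    have r: "is_path V E r" "hd r = c" "last r = last ?p" using path_drop[OF Pxp(1)[OF xX] i(1)] i(2) unfolding r_def by auto
    have rne: "r \<noteq> []" using r(1) unfolding is_path_succ by blast
    have xr: "x \<notin> set r"
    proof
      assume "x \<in> set r"
      then obtain m where "m < length r" "r ! m = x" by (metis in_set_conv_nth)
      then have "i + m < length ?p" "?p ! (i + m) = ?p ! 0" using Pxp(2,4)[OF xX] unfolding r_def by (auto simp: hd_conv_nth)
      then show False using d i0 nth_eq_iff_index_eq by fastforce
    qed
    have rX: "set r \<inter> X = {}" using PxX[OF xX] xr set_drop_subset[of i ?p] unfolding r_def by blast
    have rV: "set r \<subseteq> V - X" using r(1) rX unfolding is_path_succ by blast
    define F where "F = induced_edges E (V - X)"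
    have rF: "successively (ed F) r"
    proof -
      have "successively (\<lambda>a b. a \<in> V - X \<and> b \<in> V - X \<and> ed E a b) r"
        using succ_in[of "ed E" r "V - X"] r(1) rV unfolding is_path_succ by blast
      then show ?thesis by (rule successively_mono) (auto simp: F_def induced_edges_def)
    qed
    define D where "D = C \<union> set r"
    have DV: "D \<subseteq> V - X" unfolding D_def using CVX rV by blast
    have cD: "conn D F c v" if "v \<in> D" for v
    proof (cases "v \<in> C")
      case True
      have "\<exists>p. path_from_to C (induced_edges F C) c v p" using Ccon c(2) True unfolding connected_in_def F_def by blast
      then have "conn C F c v" using conn_iff by metis
      then show ?thesis using conn_mono[of C F c v D] unfolding D_def by blast
    next
      case False
      then have "v \<in> set r" using that unfolding D_def by blast
      then have "conn (set r) F (hd r) v" using conn_walk[OF rne rF] by blast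
      then show ?thesis using conn_mono[of "set r" F c v D] r(2) unfolding D_def by blast
    qed
    have "connected_in (V - X) F D"
      unfolding connected_in_def
    proof (intro conjI ballI)
      show "D \<subseteq> V - X" using DV .
      fix u v assume "u \<in> D" "v \<in> D"
      then have "conn D F u v" using conn_all[of c D F u v] cD c(2) unfolding D_def by blast
      then show "\<exists>p. path_from_to D (induced_edges F D) u v p" using conn_iff by metis
    qed
    then have "D = C" using Cmax unfolding D_def F_def by blast
    moreover have "last r \<in> D" unfolding D_def using rne by simp
    ultimately have "last ?p \<in> C" using r(3) by simp
    then show False using Pxp(3)[OF xX] tC by blast
  qed
  define TT where "TT v = nodes_of N lhat v" for v
  define Tx where "Tx x = {s \<in> N. \<exists>a\<in>TT x. s \<in> set (tp a t)}" for x
  define l where "l s = (lhat s \<inter> C) \<union> {x \<in> X. s \<in> Tx x}" for s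
  have TTN: "TT v \<subseteq> N" for v unfolding TT_def nodes_of_def by blast
  have T1: "TT x \<subseteq> Tx x" if "x \<in> X" for x
  proof
    fix a assume a: "a \<in> TT x"
    then have "a \<in> N" using TTN by blast
    then have "a \<in> set (tp a t)" using tp[OF _ tN] in_path_ends by metis
    then show "a \<in> Tx x" unfolding Tx_def using a \<open>a \<in> N\<close> by blast
  qed
  have TTne: "TT x \<noteq> {}" if "x \<in> V" for x using Tv that unfolding TT_def by blast
  have T2: "t \<in> Tx x" if xX2: "x \<in> X" for x
  proof -
    obtain a where a: "a \<in> TT x" using TTne[of x] xX2 XV by blast
    then have "a \<in> N" using TTN by blast
    then have "t \<in> set (tp a t)" using tp[OF _ tN] in_path_ends by metis
    then show ?thesis unfolding Tx_def using a tN by blast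
  qed
  have T3: "connected_in N ET (Tx x)" if xX3: "x \<in> X" for x
    unfolding connected_in_def
  proof (intro conjI ballI)
    show "Tx x \<subseteq> N" unfolding Tx_def by blast
    have ct: "conn (Tx x) ET t s" if sx: "s \<in> Tx x" for s
    proof -
      obtain a where a: "a \<in> TT x" "s \<in> set (tp a t)" using sx unfolding Tx_def by blast
      have aN: "a \<in> N" using a(1) TTN by blast
      have pa: "path_from_to N ET a t (tp a t)" using tp[OF aN tN] .
      have w: "tp a t \<noteq> []" "successively (ed ET) (tp a t)" "hd (tp a t) = a" "last (tp a t) = t" "set (tp a t) \<subseteq> N"
        using pa unfolding path_from_to_def is_path_succ by auto
      have sub: "set (tp a t) \<subseteq> Tx x" unfolding Tx_def using a(1) w(5) by blast
      have "conn (set (tp a t)) ET a s" using conn_walk[OF w(1,2) a(2)] w(3) by simp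
      moreover have "conn (set (tp a t)) ET a t" using conn_walk[OF w(1,2), of t] w(3,4) last_in_set[OF w(1)] by simp
      ultimately have "conn (set (tp a t)) ET t s" using conn_trans conn_sym by metis
      then show ?thesis using conn_mono[OF _ sub] by blast
    qed
    fix u v assume "u \<in> Tx x" "v \<in> Tx x"
    then have "conn (Tx x) ET u v" using conn_all[of t "Tx x" ET u v] ct T2[OF xX3] by blast
    then show "\<exists>p. path_from_to (Tx x) (induced_edges ET (Tx x)) u v p" using conn_iff by metis
  qed
  have nodesC: "nodes_of N l v = nodes_of N lhat v" if "v \<in> C" for v
    using that CVX unfolding nodes_of_def l_def by auto
  have nodesX: "nodes_of N l v = Tx v" if "v \<in> X" for v
    using that CVX unfolding nodes_of_def l_def Tx_def by auto
  have nodes_sup: "nodes_of N lhat v \<subseteq> nodes_of N l v" if "v \<in> X \<union> C" for v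
    using that nodesC nodesX T1 unfolding TT_def by blast
  have hit: "\<exists>v\<in>set (Px x). v \<in> lhat s" if xX: "x \<in> X" and s: "s \<in> Tx x" for x s
  proof -
    obtain a where a: "a \<in> TT x" "s \<in> set (tp a t)" using s unfolding Tx_def by blast
    let ?p = "Px x"
    have pw: "successively (ed E) ?p" "?p \<noteq> []" "set ?p \<subseteq> V" using Pxp(1)[OF xX] unfolding is_path_succ by auto
    have tc: "\<forall>v\<in>set ?p. \<forall>u\<in>TT v. \<forall>w\<in>TT v. conn (TT v) ET u w"
    proof (intro ballI)
      fix v u w assume "v \<in> set ?p" "u \<in> TT v" "w \<in> TT v"
      moreover have "v \<in> V" using \<open>v \<in> set ?p\<close> pw(3) by blast
      ultimately show "conn (TT v) ET u w" using Tv conn_iff unfolding TT_def connected_in_def by metis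
    qed
    have te: "\<forall>u w. {u,w} \<in> E \<longrightarrow> (\<exists>s\<in>TT u. \<exists>s'\<in>TT w. s = s' \<or> {s,s'} \<in> ET)"
      using Te unfolding TT_def by blast
    have a1: "a \<in> TT (hd ?p)" using a(1) Pxp(2)[OF xX] by simp
    have t1: "t \<in> TT (last ?p)" using Pxp(3)[OF xX] tN unfolding TT_def nodes_of_def by blast
    have "conn (\<Union>v\<in>set ?p. TT v) ET a t" using union_conn[OF pw(1,2) tc te a1 t1] .
    then obtain w where w: "w \<noteq> []" "set w \<subseteq> (\<Union>v\<in>set ?p. TT v)" "successively (ed ET) w" "hd w = a" "last w = t"
      unfolding conn_def by blast
    obtain q where q: "q \<noteq> []" "distinct q" "set q \<subseteq> set w" "successively (ed ET) q" "hd q = hd w" "last q = last w"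
      using walk_to_path[OF w(1,3)] by blast
    have "set q \<subseteq> N" using q(3) w(2) TTN by blast
    then have "path_from_to N ET a t q" unfolding path_from_to_def is_path_succ using q w by simp
    then have "q = tp a t" by (rule tpu)
    then have "s \<in> (\<Union>v\<in>set ?p. TT v)" using a(2) q(3) w(2) by blast
    then show ?thesis unfolding TT_def nodes_of_def by blast
  qed
  have cardl: "card (l s) \<le> card (lhat s)" if sN: "s \<in> N" for s
  proof -
    let ?K = "{x \<in> X. s \<in> Tx x}"
    define f where "f x = (SOME v. v \<in> set (Px x) \<and> v \<in> lhat s)" for x
    have f: "f x \<in> set (Px x) \<and> f x \<in> lhat s" if "x \<in> ?K" for x
      unfolding f_def using hit[of x s] that by (metis (mono_tags, lifting) mem_Collect_eq someI_ex)
    have finl: "finite (lhat s)" using lV sN finV finite_subset by blast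
    have injf: "inj_on f ?K"
    proof
      fix x y assume h: "x \<in> ?K" "y \<in> ?K" "f x = f y"
      show "x = y"
      proof (rule ccontr)
        assume "x \<noteq> y"
        then have "set (Px x) \<inter> set (Px y) = {}" using Pxdis h(1,2) by blast
        then show False using f[OF h(1)] f[OF h(2)] h(3) by auto
      qed
    qed
    have fim: "f ` ?K \<subseteq> lhat s - C"
    proof
      fix v assume "v \<in> f ` ?K"
      then obtain x where x: "x \<in> ?K" "v = f x" by blast
      then show "v \<in> lhat s - C" using f[OF x(1)] PxC[of x] by blast
    qed
    have "card ?K \<le> card (lhat s - C)" using card_inj_on_le[OF injf fim] finl by simp
    moreover have "card (l s) \<le> card (lhat s \<inter> C) + card ?K" unfolding l_def by (rule card_Un_le)
    moreover have "card (lhat s \<inter> C) + card (lhat s - C) = card (lhat s)"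
    proof -
      have "(lhat s \<inter> C) \<union> (lhat s - C) = lhat s" by blast
      moreover have "card ((lhat s \<inter> C) \<union> (lhat s - C)) = card (lhat s \<inter> C) + card (lhat s - C)"
        by (rule card_Un_disjoint) (use finl in auto)
      ultimately show ?thesis by simp
    qed
    ultimately show ?thesis by linarith
  qed
  have leafl: "l s \<subseteq> lhat s" if lf: "leaf N ET s" "s \<noteq> t" for s
  proof
    fix v assume v: "v \<in> l s"
    show "v \<in> lhat s"
    proof (cases "v \<in> C")
      case True then show ?thesis using v CVX unfolding l_def by blast
    next
      case False
      then have vX: "v \<in> X" and sT: "s \<in> Tx v" using v unfolding l_def by blast+
      obtain a where a: "a \<in> TT v" "s \<in> set (tp a t)" using sT unfolding Tx_def by blast
      have aN: "a \<in> N" using a(1) TTN by blast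
      have pa: "is_path N ET (tp a t)" "hd (tp a t) = a" "last (tp a t) = t" using tp[OF aN tN] unfolding path_from_to_def by auto
      have "s = a"
      proof (rule ccontr)
        assume "s \<noteq> a"
        then have "2 \<le> degree ET s" using internal_degree[OF GT pa(1) a(2)] pa(2,3) lf(2) by simp
        then show False using lf(1) unfolding leaf_def by simp
      qed
      then show ?thesis using a(1) unfolding TT_def nodes_of_def by blast
    qed
  qed
  have lt: "l t = X"
  proof
    show "l t \<subseteq> X" unfolding l_def using tC by blast
    show "X \<subseteq> l t" unfolding l_def using T2 by blast
  qed
  have vd: "vine_decomposition (X \<union> C) (induced_edges E (X \<union> C)) N ET l"
    unfolding vine_decomposition_def
  proof (intro conjI ballI allI impI)
    show "tree N ET" using tree .
  next
    fix s assume "s \<in> N" then show "l s \<subseteq> X \<union> C" unfolding l_def by blast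
  next
    fix v assume v: "v \<in> X \<union> C"
    show "nodes_of N l v \<noteq> {}"
    proof (cases "v \<in> X")
      case True then show ?thesis using nodesX T2 by blast
    next
      case False then have "v \<in> C" using v by blast
      then show ?thesis using nodesC Tv CVX by blast
    qed
  next
    fix v assume v: "v \<in> X \<union> C"
    show "connected_in N ET (nodes_of N l v)"
    proof (cases "v \<in> X")
      case True then show ?thesis using nodesX T3 by simp
    next
      case False then have "v \<in> C" using v by blast
      then show ?thesis using nodesC Tv CVX by auto
    qed
  next
    fix u v assume uv: "{u, v} \<in> induced_edges E (X \<union> C)"
    then have e: "{u,v} \<in> E" and uW: "u \<in> X \<union> C" and vW: "v \<in> X \<union> C" unfolding induced_edges_def by auto
    obtain s s' where ss: "s \<in> nodes_of N lhat u" "s' \<in> nodes_of N lhat v" "s = s' \<or> {s, s'} \<in> ET"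
      using Te e by blast
    then show "\<exists>s\<in>nodes_of N l u. \<exists>s'\<in>nodes_of N l v. s = s' \<or> {s, s'} \<in> ET"
      using nodes_sup[OF uW] nodes_sup[OF vW] by blast
  qed
  show ?thesis using vd lt leafl cardl by blast
qed


end
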